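(* Let $C_1 \subseteq \mathbb{R}^2$ be convex, let $\mathbf{t} \in \mathbb{R}^2$ be a nonzero vector, and let $C_2 = C_1 + \mathbf{t} = \{x + \mathbf{t} : x \in C_1\}$. Choose Cartesian coordinates whose positive $x$-axis points in the direction of $\mathbf{t}$. If $p \in C_1 \setminus C_2$ and $q \in C_2$ have the same $y$-coordinate, then the $x$-coordinate of $p$ is strictly smaller than that of $q$. Similarly, if $p \in C_2 \setminus C_1$ and $q \in C_1$ have the same $y$-coordinate, then the $x$-coordinate of $p$ is strictly larger than that of $q$. *)

theory Defs
  imports "HOL-Analysis.Analysis"
begin

text \<open>Points of the plane are elements of real^2.  Given a nonzero vector t,
  we use the Cartesian coordinate system (same origin) whose positive x-axis points
  in the direction of t and whose y-axis is t rotated by +90 degrees.\<close>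

definition perp2 :: "real^2 \<Rightarrow> real^2" where
  "perp2 v = vector [- (v$2), v$1]"

definition xcoord :: "real^2 \<Rightarrow> real^2 \<Rightarrow> real" where
  "xcoord t p = (p \<bullet> t) / norm t"

definition ycoord :: "real^2 \<Rightarrow> real^2 \<Rightarrow> real" where
  "ycoord t p = (p \<bullet> perp2 t) / norm t"

end

theory Submission
  imports Defs
begin

lemma para:
  fixes d t :: "real^2"
  assumes "t \<noteq> 0" "d \<bullet> perp2 t = 0"
  shows "d = ((d \<bullet> t)/(t \<bullet> t)) *\<^sub>R t"
proof -
  have tt: "t \<bullet> t \<noteq> 0" using assms(1) by simp
  have h: "- (d$1 * t$2) + d$2 * t$1 = 0"
    using assms(2) by (simp add: perp2_def inner_vec_def sum_2)
  have e: "t \<bullet> t = t$1*t$1 + t$2*t$2" "d \<bullet> t = d$1*t$1 + d$2*t$2"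
    by (simp_all add: inner_vec_def sum_2)
  have "(t \<bullet> t) *\<^sub>R d = (d \<bullet> t) *\<^sub>R t"
  proof (subst vec_eq_iff, rule allI)
    fix i :: 2
    have "i = 1 \<or> i = 2" using exhaust_2 by auto
    then show "((t \<bullet> t) *\<^sub>R d) $ i = ((d \<bullet> t) *\<^sub>R t) $ i"
      using h unfolding e by (auto simp: algebra_simps)
  qed
  then have "(1/(t \<bullet> t)) *\<^sub>R ((t \<bullet> t) *\<^sub>R d) = (1/(t \<bullet> t)) *\<^sub>R ((d \<bullet> t) *\<^sub>R t)" by simp
  then show ?thesis using tt by simp
qed

lemma diff_form:
  fixes p q t :: "real^2"
  assumes "t \<noteq> 0" "ycoord t p = ycoord t q"
  shows "q = p + ((xcoord t q - xcoord t p)/norm t) *\<^sub>R t"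
proof -
  have n: "norm t \<noteq> 0" using assms by simp
  have "(q - p) \<bullet> perp2 t = 0" using assms n
    by (simp add: ycoord_def inner_diff_left divide_cancel_right)
  then have "q - p = (((q-p) \<bullet> t)/(t \<bullet> t)) *\<^sub>R t" using para assms by blast
  moreover have "((q-p) \<bullet> t)/(t \<bullet> t) = (xcoord t q - xcoord t p)/norm t"
    using n by (simp add: xcoord_def inner_diff_left power2_norm_eq_inner[symmetric]
        diff_divide_distrib power2_eq_square)
  ultimately show ?thesis by (metis add.commute diff_add_cancel)
qed

theorem mainTheorem3:
  fixes C1 :: "(real^2) set" and t :: "real^2"
  assumes "convex C1" and "t \<noteq> 0"
  defines "C2 \<equiv> (\<lambda>x. x + t) ` C1"
  shows "(\<forall>p q. p \<in> C1 - C2 \<longrightarrow> q \<in> C2 \<longrightarrow> ycoord t p = ycoord t q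
            \<longrightarrow> xcoord t p < xcoord t q)
       \<and> (\<forall>p q. p \<in> C2 - C1 \<longrightarrow> q \<in> C1 \<longrightarrow> ycoord t p = ycoord t q
            \<longrightarrow> xcoord t p > xcoord t q)"
proof (intro conjI allI impI)
  fix p q assume p: "p \<in> C1 - C2" and q: "q \<in> C2" and y: "ycoord t p = ycoord t q"
  define s where "s = (xcoord t q - xcoord t p)/norm t"
  have qe: "q = p + s *\<^sub>R t" using diff_form[OF assms(2) y] s_def by simp
  obtain q0 where q0: "q0 \<in> C1" "q = q0 + t" using q C2_def by auto
  show "xcoord t p < xcoord t q"
  proof (rule ccontr)
    assume "\<not> ?thesis"
    then have s: "s \<le> 0" using assms(2) by (simp add: s_def divide_nonpos_pos)
    define l where "l = 1/(1-s)"
    have l: "0 \<le> l" "l \<le> 1" using s by (auto simp: l_def)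
    have q0e: "q0 = p + (s - 1) *\<^sub>R t" using qe q0 by (simp add: algebra_simps)
    have "(1-l) *\<^sub>R p + l *\<^sub>R q0 = p + (l*(s-1)) *\<^sub>R t" by (simp add: q0e algebra_simps)
    also have "l*(s-1) = -1" using s by (simp add: l_def field_simps)
    finally have eq: "(1-l) *\<^sub>R p + l *\<^sub>R q0 = p - t" by simp
    have "p \<in> C1" using p by simp
    from convexD_alt[OF assms(1) this q0(1) l] eq have "p - t \<in> C1" by simp
    then have "p \<in> C2" unfolding C2_def by (rule rev_image_eqI) simp
    then show False using p by simp
  qed
next
  fix p q assume p: "p \<in> C2 - C1" and q: "q \<in> C1" and y: "ycoord t p = ycoord t q"
  define s where "s = (xcoord t q - xcoord t p)/norm t"
  have qe: "q = p + s *\<^sub>R t" using diff_form[OF assms(2) y] s_def by simp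
  obtain p0 where p0: "p0 \<in> C1" "p = p0 + t" using p C2_def by auto
  show "xcoord t p > xcoord t q"
  proof (rule ccontr)
    assume "\<not> ?thesis"
    then have s: "s \<ge> 0" using assms(2) by (simp add: s_def)
    define l where "l = 1/(1+s)"
    have l: "0 \<le> l" "l \<le> 1" using s by (auto simp: l_def)
    have qe2: "q = p0 + (1 + s) *\<^sub>R t" using qe p0 by (simp add: algebra_simps)
    have "(1-l) *\<^sub>R p0 + l *\<^sub>R q = p0 + (l*(1+s)) *\<^sub>R t" by (simp add: qe2 algebra_simps)
    also have "l*(1+s) = 1" using s by (simp add: l_def field_simps)
    finally have "p \<in> C1"
      using convexD_alt[OF assms(1) p0(1) q l] p0 by auto
    then show False using p by simp
  qed
qed

end
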